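(* Let $\beta_2,\beta_3,\delta_1,\delta_2,\delta_3,\mu_1,\mu_2,\eta,K_1,K_2,K_3$ be positive real numbers and consider the system \[ \begin{aligned} \dot{H} &= - \delta_1 H - \eta SH + \mu_1C\left(1-\frac{H}{K_1}\right), \\ \dot{S} &= \beta_2 S \left(1-\frac{S}{K_2}\right) - \delta_2 S - \eta S H + \mu_2 C \left(1-\frac{S}{K_2}\right), \\ \dot{C} &= \beta_3 C \left(1-\frac{C}{K_3}\right) - \delta_3 C + \eta S H . \end{aligned} \] Let $D=[0, K_1] \times [0, K_2] \times [0, \tilde{K}_3]$ with \[ \tilde{K}_3 := \frac{1}{2} \left( \frac{\beta_3 - \delta_3}{\beta_3} K_3 + \sqrt{\left(\frac{\beta_3-\delta_3}{\beta_3}\right)^2 K_3^2 + 8\frac{\eta}{\beta_3} K_1 K_2K_3} \right). \] Then: (a) Every fixed point of the system lying in $\mathbb{R}_{\ge 0}^3$ with at least one vanishing component is either $(0,0,0)$ or $\left(0, \frac{\beta_2-\delta_2}{\beta_2} K_2, 0 \right)$. (b) Every fixed point $(H^\star, S^\star, C^\star)$ in the interior of $D$ satisfies \[ \frac{\beta_3 - \delta_3}{\beta_3} K_3 < C^\star < \frac{\beta_3 - \delta_3 + \mu_1}{\beta_3} K_3 . \] (c) In each of the following cases there exists at least one fixed point in the interior of $D$: (i) $\beta_3 > \delta_3$; (ii) $\beta_3 = \delta_3$ and $\beta_2-\delta_2 > -\frac{\eta \mu_1 \mu_2 K_3}{\beta_3 \delta_1}$; (iii) $-\mu_1 < \beta_3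 - \delta_3 < 0$ and $\beta_2 - \delta_2 > -\frac{\beta_2\delta_1(\beta_3-\delta_3)}{\eta K_2 (\beta_3-\delta_3+\mu_1)}$.
   Context: The system is a population model (mycobiont host $H$, photobiont symbiont $S$, lichen complex $C$) in which all parameters are birth, death, formation rates and carrying capacities. A fixed point is a point of $\mathbb{R}^3$ at which the right-hand side of the system vanishes. *)

theory Defs
  imports "HOL-Analysis.Analysis"
begin

definition rhsH :: "real \<Rightarrow> real \<Rightarrow> real \<Rightarrow> real \<Rightarrow> real \<Rightarrow> real \<Rightarrow> real \<Rightarrow> real" where
  "rhsH d1 eta m1 K1 H S C = - d1 * H - eta * S * H + m1 * C * (1 - H / K1)"

definition rhsS :: "real \<Rightarrow> real \<Rightarrow> real \<Rightarrow> real \<Rightarrow> real \<Rightarrow> real \<Rightarrow> real \<Rightarrow> real \<Rightarrow> real" where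
  "rhsS b2 d2 eta m2 K2 H S C =
     b2 * S * (1 - S / K2) - d2 * S - eta * S * H + m2 * C * (1 - S / K2)"

definition rhsC :: "real \<Rightarrow> real \<Rightarrow> real \<Rightarrow> real \<Rightarrow> real \<Rightarrow> real \<Rightarrow> real \<Rightarrow> real" where
  "rhsC b3 d3 eta K3 H S C = b3 * C * (1 - C / K3) - d3 * C + eta * S * H"

definition fixed_point ::
  "real \<Rightarrow> real \<Rightarrow> real \<Rightarrow> real \<Rightarrow> real \<Rightarrow> real \<Rightarrow> real \<Rightarrow> real \<Rightarrow> real \<Rightarrow> real \<Rightarrow> real
   \<Rightarrow> real \<times> real \<times> real \<Rightarrow> bool" where
  "fixed_point b2 b3 d1 d2 d3 m1 m2 eta K1 K2 K3 p =
     (case p of (H, S, C) \<Rightarrow>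
        rhsH d1 eta m1 K1 H S C = 0 \<and>
        rhsS b2 d2 eta m2 K2 H S C = 0 \<and>
        rhsC b3 d3 eta K3 H S C = 0)"

definition K3tilde :: "real \<Rightarrow> real \<Rightarrow> real \<Rightarrow> real \<Rightarrow> real \<Rightarrow> real \<Rightarrow> real" where
  "K3tilde b3 d3 eta K1 K2 K3 =
     (1/2) * ((b3 - d3) / b3 * K3
              + sqrt (((b3 - d3) / b3)\<^sup>2 * K3\<^sup>2 + 8 * (eta / b3) * K1 * K2 * K3))"

definition domD :: "real \<Rightarrow> real \<Rightarrow> real \<Rightarrow> real \<Rightarrow> real \<Rightarrow> real \<Rightarrow> (real \<times> real \<times> real) set" where
  "domD b3 d3 eta K1 K2 K3 = {0..K1} \<times> {0..K2} \<times> {0..K3tilde b3 d3 eta K1 K2 K3}"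

end

theory Submission
  imports Defs
begin

lemma interior_D: "interior (domD b3 d3 eta K1 K2 K3) = {0<..<K1} \<times> {0<..<K2} \<times> {0<..<K3tilde b3 d3 eta K1 K2 K3}"
  unfolding domD_def by (simp add: interior_Times)

lemma C_lt_K3tilde:
  fixes b3 d3 eta K1 K2 K3 C :: real
  assumes b3: "b3 > 0" and K3: "K3 > 0" and hC: "C * (b3 * C / K3 - (b3 - d3)) < 2 * eta * K1 * K2"
  shows "C < K3tilde b3 d3 eta K1 K2 K3"
proof (rule ccontr)
  define a where "a = (b3 - d3) / b3 * K3"
  define Z where "Z = eta * K1 * K2 * K3 / b3"
  have Zeq: "8 * (eta / b3) * K1 * K2 * K3 = 8 * Z" unfolding Z_def by simp
  define X where "X = a\<^sup>2 + 8 * Z"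
  have XX: "((b3 - d3) / b3)\<^sup>2 * K3\<^sup>2 + 8 * (eta / b3) * K1 * K2 * K3 = X"
    unfolding X_def a_def Zeq by (simp add: power_mult_distrib power_divide)
  have kt: "K3tilde b3 d3 eta K1 K2 K3 = (1/2) * (a + sqrt X)"
    unfolding K3tilde_def XX a_def ..
  assume "\<not> ?thesis"
  hence h: "2*C - a \<ge> sqrt X"
    unfolding kt by simp
  have "X \<le> (2*C - a)^2"
  proof (cases "X \<ge> 0")
    case True
    have "X = (sqrt X)^2" using True by simp
    also have "\<dots> \<le> (2*C - a)^2" by (rule power_mono[OF h]) (simp add: True)
    finally show ?thesis .
  next
    case False
    then show ?thesis using zero_le_power2[of "2*C-a"] by linarith
  qed
  moreover have "(2*C - a)^2 = 4*(C*C - C*a) + a^2" by (simp add: power2_eq_square algebra_simps)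
  ultimately have "a\<^sup>2 + 8 * Z \<le> 4 * (C * C - C * a) + a\<^sup>2" unfolding X_def by simp
  hence i1: "2 * Z \<le> C*C - C*a" by simp
  have "C * (b3 * C / K3 - (b3 - d3)) = (b3/K3) * (C*C - C*a)"
    unfolding a_def using b3 K3 by (simp add: field_simps)
  hence "(b3/K3) * (C*C - C*a) < 2 * eta * K1 * K2" using hC by simp
  hence "C*C - C*a < (2 * eta * K1 * K2) * K3 / b3" using b3 K3 by (simp add: field_simps)
  moreover have "(2 * eta * K1 * K2) * K3 / b3 = 2 * Z" unfolding Z_def by simp
  ultimately show False using i1 by linarith
qed

definition rhoF :: "real \<Rightarrow> real \<Rightarrow> real \<Rightarrow> real \<Rightarrow> real" where
  "rhoF b3 d3 K3 C = b3/K3*C - (b3-d3)"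
definition piF :: "real \<Rightarrow> real \<Rightarrow> real \<Rightarrow> real \<Rightarrow> real \<Rightarrow> real" where
  "piF b3 d3 m1 K3 C = m1 + (b3-d3) - b3/K3*C"
definition DF :: "real \<Rightarrow> real \<Rightarrow> real \<Rightarrow> real \<Rightarrow> real" where
  "DF d1 m1 K1 C = d1 + m1*C/K1"
definition G2 where
  "G2 b2 b3 d1 d2 d3 m1 m2 eta K1 K2 K3 C =
    (b2-d2)*eta*rhoF b3 d3 K3 C*piF b3 d3 m1 K3 C*DF d1 m1 K1 C
    - b2*(rhoF b3 d3 K3 C)^2*(DF d1 m1 K1 C)^2/K2
    - eta^2*C*(piF b3 d3 m1 K3 C)^2*(rhoF b3 d3 K3 C - m2)
    - m2*eta*C*rhoF b3 d3 K3 C*piF b3 d3 m1 K3 C*DF d1 m1 K1 C/K2"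

lemma G2_cont: "continuous_on A (\<lambda>C. G2 b2 b3 d1 d2 d3 m1 m2 eta K1 K2 K3 C)"
  unfolding G2_def rhoF_def piF_def DF_def divide_inverse by (auto intro!: continuous_intros)

lemma construct:
  fixes b2 b3 d1 d2 d3 m1 m2 eta K1 K2 K3 C :: real
  assumes pos: "b2 > 0" "b3 > 0" "d1 > 0" "d2 > 0" "d3 > 0" "m1 > 0" "m2 > 0"
               "eta > 0" "K1 > 0" "K2 > 0" "K3 > 0"
    and C: "C > 0" and rho: "rhoF b3 d3 K3 C > 0" and pi: "piF b3 d3 m1 K3 C > 0"
    and G: "G2 b2 b3 d1 d2 d3 m1 m2 eta K1 K2 K3 C = 0"
  shows "\<exists>p. fixed_point b2 b3 d1 d2 d3 m1 m2 eta K1 K2 K3 p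
                 \<and> p \<in> interior (domD b3 d3 eta K1 K2 K3)"
proof -
  define r where "r = rhoF b3 d3 K3 C"
  define q where "q = piF b3 d3 m1 K3 C"
  define D where "D = DF d1 m1 K1 C"
  have D: "D > 0" unfolding D_def DF_def using pos C by (simp add: add_pos_nonneg)
  have rq: "r + q = m1" unfolding r_def q_def rhoF_def piF_def by simp
  have rC: "C * r = b3*C*C/K3 - (b3-d3)*C" unfolding r_def rhoF_def by (simp add: algebra_simps)
  define H where "H = C*q/D"
  define S where "S = r*D/(eta*q)"
  have q0: "q > 0" "r > 0" using rho pi r_def q_def by auto
  have SH: "eta * S * H = C * r" unfolding S_def H_def using D q0 pos(8) by (simp add: field_simps)
  have HD: "H * D = C * q" unfolding H_def using D by simp
  have Hp: "H > 0" unfolding H_def using C q0 D by simp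
  have Sp: "S > 0" unfolding S_def using q0 D pos by simp
  have eH: "rhsH d1 eta m1 K1 H S C = 0"
  proof -
    have "rhsH d1 eta m1 K1 H S C = - H * (d1 + m1*C/K1) - eta*S*H + m1*C"
      unfolding rhsH_def using pos by (simp add: field_simps)
    also have "\<dots> = - C*q - C*r + m1*C" using HD SH unfolding D_def DF_def by simp
    also have "\<dots> = 0" by (simp add: rq[symmetric] algebra_simps)
    finally show ?thesis .
  qed
  have eC: "rhsC b3 d3 eta K3 H S C = 0"
    unfolding rhsC_def SH rC using pos by (simp add: field_simps)
  have Sq: "r*D = eta*q*S" unfolding S_def using q0 pos by simp
  have G2e: "G2 b2 b3 d1 d2 d3 m1 m2 eta K1 K2 K3 C = (b2-d2)*eta*q*(r*D) - b2*(r*D)^2/K2 - eta^2*C*q^2*(r-m2) - m2*eta*C*q*(r*D)/K2"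
    unfolding G2_def r_def[symmetric] q_def[symmetric] D_def[symmetric] by (simp add: algebra_simps power2_eq_square)
  have eS: "eta^2*q^2 * rhsS b2 d2 eta m2 K2 H S C = G2 b2 b3 d1 d2 d3 m1 m2 eta K1 K2 K3 C"
  proof -
    have "rhsS b2 d2 eta m2 K2 H S C = b2 * S * (1 - S / K2) - d2 * S - C * r + m2 * C * (1 - S / K2)"
      unfolding rhsS_def using SH by simp
    moreover have "eta^2*q^2 * (b2 * S * (1 - S / K2) - d2 * S - C * r + m2 * C * (1 - S / K2)) = G2 b2 b3 d1 d2 d3 m1 m2 eta K1 K2 K3 C"
      unfolding G2e Sq by (simp add: algebra_simps power2_eq_square diff_divide_distrib add_divide_distrib)
    ultimately show ?thesis by simp
  qed
  hence eS0: "rhsS b2 d2 eta m2 K2 H S C = 0" using G q0 pos by simp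
  have HK: "H < K1"
  proof -
    have "C * q < C * m1" using C q0 rq by simp
    moreover have "K1 * D = K1 * d1 + m1 * C" unfolding D_def DF_def using pos by (simp add: field_simps)
    moreover have "K1 * d1 > 0" using pos by simp
    ultimately have "H * D < K1 * D" unfolding HD by (simp add: algebra_simps)
    thus ?thesis using D by simp
  qed
  have SK: "S < K2"
  proof (rule ccontr)
    assume "\<not> S < K2"
    hence s: "1 - S/K2 \<le> 0" using pos by (simp add: field_simps)
    have "b2 * S * (1 - S / K2) \<le> 0" using s Sp pos by (simp add: mult_nonneg_nonpos)
    moreover have "m2 * C * (1 - S / K2) \<le> 0" using s C pos by (simp add: mult_nonneg_nonpos)
    moreover have "d2 * S > 0" "eta * S * H > 0" using pos Sp Hp by auto
    ultimately have "rhsS b2 d2 eta m2 K2 H S C < 0" unfolding rhsS_def by linarith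
    thus False using eS0 by simp
  qed
  have CK: "C < K3tilde b3 d3 eta K1 K2 K3"
  proof (rule C_lt_K3tilde)
    have "C * (b3 * C / K3 - (b3 - d3)) = eta * S * H" using SH rC by (simp add: algebra_simps)
    also have "\<dots> < eta * (K2 * K1)"
    proof -
      have "S * H < K2 * K1" using Sp Hp SK HK by (intro mult_strict_mono) auto
      thus ?thesis using pos by (simp add: mult.assoc)
    qed
    also have "\<dots> < 2 * eta * K1 * K2" using pos by (simp add: algebra_simps)
    finally show "C * (b3 * C / K3 - (b3 - d3)) < 2 * eta * K1 * K2" .
  qed (use pos in auto)
  show ?thesis
  proof (intro exI conjI)
    show "fixed_point b2 b3 d1 d2 d3 m1 m2 eta K1 K2 K3 (H,S,C)"
      unfolding fixed_point_def using eH eC eS0 by simp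
    show "(H,S,C) \<in> interior (domD b3 d3 eta K1 K2 K3)"
      unfolding interior_D using Hp Sp C HK SK CK by simp
  qed
qed

theorem theorem2:
  fixes b2 b3 d1 d2 d3 m1 m2 eta K1 K2 K3 :: real
  assumes pos: "b2 > 0" "b3 > 0" "d1 > 0" "d2 > 0" "d3 > 0" "m1 > 0" "m2 > 0"
               "eta > 0" "K1 > 0" "K2 > 0" "K3 > 0"
  shows
    "(\<forall>H S C. fixed_point b2 b3 d1 d2 d3 m1 m2 eta K1 K2 K3 (H, S, C)
        \<and> H \<ge> 0 \<and> S \<ge> 0 \<and> C \<ge> 0 \<and> (H = 0 \<or> S = 0 \<or> C = 0)
        \<longrightarrow> (H, S, C) = (0, 0, 0) \<or> (H, S, C) = (0, (b2 - d2) / b2 * K2, 0))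
   \<and> (\<forall>H S C. fixed_point b2 b3 d1 d2 d3 m1 m2 eta K1 K2 K3 (H, S, C)
        \<and> (H, S, C) \<in> interior (domD b3 d3 eta K1 K2 K3)
        \<longrightarrow> (b3 - d3) / b3 * K3 < C \<and> C < (b3 - d3 + m1) / b3 * K3)
   \<and> ((b3 > d3
        \<or> (b3 = d3 \<and> b2 - d2 > - (eta * m1 * m2 * K3) / (b3 * d1))
        \<or> (- m1 < b3 - d3 \<and> b3 - d3 < 0 \<and>
            b2 - d2 > - (b2 * d1 * (b3 - d3)) / (eta * K2 * (b3 - d3 + m1))))
       \<longrightarrow> (\<exists>p. fixed_point b2 b3 d1 d2 d3 m1 m2 eta K1 K2 K3 p
                 \<and> p \<in> interior (domD b3 d3 eta K1 K2 K3)))"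
proof (intro conjI allI impI)
  fix H S C
  assume a: "fixed_point b2 b3 d1 d2 d3 m1 m2 eta K1 K2 K3 (H, S, C) \<and> 0 \<le> H \<and> 0 \<le> S \<and> 0 \<le> C \<and> (H = 0 \<or> S = 0 \<or> C = 0)"
  hence eH: "- d1 * H - eta * S * H + m1 * C * (1 - H / K1) = 0"
    and eS: "b2 * S * (1 - S / K2) - d2 * S - eta * S * H + m2 * C * (1 - S / K2) = 0"
    and eC: "b3 * C * (1 - C / K3) - d3 * C + eta * S * H = 0"
    unfolding fixed_point_def rhsH_def rhsS_def rhsC_def by auto
  show "(H, S, C) = (0, 0, 0) \<or> (H, S, C) = (0, (b2 - d2) / b2 * K2, 0)"
  proof -
    have s1: "S = 0 \<Longrightarrow> C = 0" using eS pos by simp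
    have s2: "C = 0 \<Longrightarrow> S = 0 \<Longrightarrow> H = 0" using eH pos by simp
    have s3: "C = 0 \<Longrightarrow> H \<noteq> 0 \<Longrightarrow> S = 0" using eC pos by simp
    have H0: "H = 0" using s1 s2 s3 a by blast
    have C0: "C = 0" using eH H0 pos by simp
    have "S * (b2 * (1 - S / K2) - d2) = 0" using eS H0 C0 by (simp add: algebra_simps)
    hence "S = 0 \<or> b2 * (1 - S / K2) - d2 = 0" by simp
    moreover have "b2 * (1 - S / K2) - d2 = 0 \<Longrightarrow> S = (b2 - d2) / b2 * K2"
      using pos by (simp add: field_simps)
    ultimately show ?thesis using H0 C0 by auto
  qed
next
  fix H S C
  assume a: "fixed_point b2 b3 d1 d2 d3 m1 m2 eta K1 K2 K3 (H, S, C) \<and> (H, S, C) \<in> interior (domD b3 d3 eta K1 K2 K3)"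
  hence eH: "- d1 * H - eta * S * H + m1 * C * (1 - H / K1) = 0"
    and eC: "b3 * C * (1 - C / K3) - d3 * C + eta * S * H = 0"
    unfolding fixed_point_def rhsH_def rhsS_def rhsC_def by auto
  have box: "0 < H" "H < K1" "0 < S" "C > 0"
    using a unfolding interior_D by auto
  have SH: "eta * S * H > 0" using box pos by simp
  have cr: "C * (b3 * C / K3 - (b3 - d3)) = eta * S * H" using eC by (simp add: algebra_simps)
  hence "b3 * C / K3 - (b3 - d3) > 0" using SH box by (metis zero_less_mult_pos)
  thus "(b3 - d3) / b3 * K3 < C" using pos by (simp add: field_simps)
  have "m1 * C * (1 - H / K1) = d1 * H + eta * S * H" using eH by linarith
  also have "\<dots> = H * (d1 + eta * S)" by (simp add: algebra_simps)
  finally have "m1 * C * (1 - H / K1) = H * (d1 + eta * S)" .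
  moreover have "m1 * C * (1 - H / K1) < m1 * C" using box pos by simp
  moreover have "eta * S * H < H * (d1 + eta * S)" using box pos by (simp add: algebra_simps)
  ultimately have "C * (b3 * C / K3 - (b3 - d3)) < m1 * C" using cr by linarith
  hence "C * (b3 * C / K3 - (b3 - d3)) < C * m1" by (simp add: mult.commute)
  hence "b3 * C / K3 - (b3 - d3) < m1" using box by simp
  thus "C < (b3 - d3 + m1) / b3 * K3" using pos by (simp add: field_simps)
next
  assume cases: "b3 > d3
        \<or> (b3 = d3 \<and> b2 - d2 > - (eta * m1 * m2 * K3) / (b3 * d1))
        \<or> (- m1 < b3 - d3 \<and> b3 - d3 < 0 \<and>
            b2 - d2 > - (b2 * d1 * (b3 - d3)) / (eta * K2 * (b3 - d3 + m1)))"
  have hb: "b3 - d3 + m1 > 0" using cases pos by auto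
  define c1 where "c1 = (b3 - d3 + m1) * K3 / b3"
  have c1p: "c1 > 0" unfolding c1_def using hb pos by simp
  have D1: "DF d1 m1 K1 c1 > 0" unfolding DF_def using c1p pos by (simp add: add_pos_pos)
  have pi1: "piF b3 d3 m1 K3 c1 = 0" unfolding piF_def c1_def using pos by simp
  have rho1: "rhoF b3 d3 K3 c1 = m1" unfolding rhoF_def c1_def using pos by simp
  have G1: "G2 b2 b3 d1 d2 d3 m1 m2 eta K1 K2 K3 c1 < 0"
  proof -
    have "G2 b2 b3 d1 d2 d3 m1 m2 eta K1 K2 K3 c1 = - (b2*m1^2*(DF d1 m1 K1 c1)^2/K2)"
      unfolding G2_def pi1 rho1 by simp
    moreover have "b2*m1^2*(DF d1 m1 K1 c1)^2/K2 > 0" using pos D1 by simp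
    ultimately show ?thesis by linarith
  qed
  have pi_pos: "piF b3 d3 m1 K3 x > 0" if "x < c1" for x
    using that unfolding piF_def c1_def using pos by (simp add: field_simps)
  have key: "\<exists>p. fixed_point b2 b3 d1 d2 d3 m1 m2 eta K1 K2 K3 p \<and> p \<in> interior (domD b3 d3 eta K1 K2 K3)"
    if "0 < x" "x < c1" "rhoF b3 d3 K3 x > 0" "G2 b2 b3 d1 d2 d3 m1 m2 eta K1 K2 K3 x = 0" for x
    by (rule construct[OF pos that(1,3) pi_pos[OF that(2)] that(4)])
  have ivt: "\<exists>x. a < x \<and> x < c1 \<and> f x = 0"
    if hc: "continuous_on {a..c1} f" "f a > 0" "f c1 < 0" "a < c1" for a and f :: "real \<Rightarrow> real"
  proof -
    obtain x where "a \<le> x" "x \<le> c1" "f x = 0"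
      using IVT2'[of f c1 0 a] hc by force
    moreover have "x \<noteq> a" "x \<noteq> c1" using hc \<open>f x = 0\<close> by auto
    ultimately show ?thesis by force
  qed
  from cases consider (i) "b3 > d3" | (ii) "b3 = d3" "b2 - d2 > - (eta * m1 * m2 * K3) / (b3 * d1)"
    | (iii) "- m1 < b3 - d3" "b3 - d3 < 0"
            "b2 - d2 > - (b2 * d1 * (b3 - d3)) / (eta * K2 * (b3 - d3 + m1))" by blast
  then show "\<exists>p. fixed_point b2 b3 d1 d2 d3 m1 m2 eta K1 K2 K3 p \<and> p \<in> interior (domD b3 d3 eta K1 K2 K3)"
  proof cases
    case i
    define c0 where "c0 = (b3 - d3) * K3 / b3"
    have c0p: "c0 > 0" unfolding c0_def using i pos by simp
    have c01: "c0 < c1" unfolding c0_def c1_def using pos by (simp add: divide_strict_right_mono)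
    have rho0: "rhoF b3 d3 K3 c0 = 0" unfolding rhoF_def c0_def using pos by simp
    have pi0: "piF b3 d3 m1 K3 c0 = m1" unfolding piF_def c0_def using pos by simp
    have G0: "G2 b2 b3 d1 d2 d3 m1 m2 eta K1 K2 K3 c0 > 0"
    proof -
      have "G2 b2 b3 d1 d2 d3 m1 m2 eta K1 K2 K3 c0 = eta^2*c0*m1^2*m2"
        unfolding G2_def rho0 pi0 by simp
      thus ?thesis using pos c0p by simp
    qed
    obtain x where x: "c0 < x" "x < c1" "G2 b2 b3 d1 d2 d3 m1 m2 eta K1 K2 K3 x = 0"
      using ivt[OF G2_cont G0 G1 c01] by blast
    have "rhoF b3 d3 K3 x > 0" using x(1) unfolding rhoF_def c0_def using pos by (simp add: field_simps)
    then show ?thesis using x c0p by (intro key[of x]) auto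
  next
    case ii
    define G3 where "G3 C = (b2-d2)*eta*(b3/K3)*piF b3 d3 m1 K3 C*DF d1 m1 K1 C
       - b2*(b3/K3)^2*C*(DF d1 m1 K1 C)^2/K2
       - eta^2*(piF b3 d3 m1 K3 C)^2*((b3/K3)*C - m2)
       - m2*eta*(b3/K3)*C*piF b3 d3 m1 K3 C*DF d1 m1 K1 C/K2" for C
    have rhoC: "rhoF b3 d3 K3 C = b3/K3*C" for C unfolding rhoF_def using ii by simp
    have G23: "G2 b2 b3 d1 d2 d3 m1 m2 eta K1 K2 K3 C = C * G3 C" for C
      unfolding G2_def G3_def rhoC by (simp add: algebra_simps power2_eq_square)
    have G3c: "continuous_on A G3" for A
      unfolding G3_def piF_def DF_def divide_inverse by (auto intro!: continuous_intros)
    have G30: "G3 0 > 0"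
    proof -
      have "G3 0 = eta*m1/K3 * ((b2-d2)*(b3*d1) + eta*m1*m2*K3)"
        unfolding G3_def piF_def DF_def using ii pos by (simp add: field_simps power2_eq_square)
      moreover have "(b2-d2)*(b3*d1) > - (eta * m1 * m2 * K3)"
        using ii(2) pos by (simp add: field_simps)
      ultimately show ?thesis using pos by simp
    qed
    have G3c1: "G3 c1 < 0"
    proof -
      have "G3 c1 = - (b2*(b3/K3)^2*c1*(DF d1 m1 K1 c1)^2/K2)"
        unfolding G3_def pi1 by simp
      moreover have "b2*(b3/K3)^2*c1*(DF d1 m1 K1 c1)^2/K2 > 0" using pos D1 c1p by simp
      ultimately show ?thesis by linarith
    qed
    obtain x where x: "0 < x" "x < c1" "G3 x = 0"
      using ivt[OF G3c G30 G3c1 c1p] by blast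
    have "rhoF b3 d3 K3 x > 0" using x(1) rhoC pos by simp
    then show ?thesis using x G23[of x] by (intro key[of x]) auto
  next
    case iii
    have rho0: "rhoF b3 d3 K3 0 = -(b3-d3)" unfolding rhoF_def by simp
    have pi0: "piF b3 d3 m1 K3 0 = b3 - d3 + m1" unfolding piF_def by simp
    have DF0: "DF d1 m1 K1 0 = d1" unfolding DF_def by simp
    have G0: "G2 b2 b3 d1 d2 d3 m1 m2 eta K1 K2 K3 0 > 0"
    proof -
      have "G2 b2 b3 d1 d2 d3 m1 m2 eta K1 K2 K3 0 =
          (-(b3-d3))*d1/K2 * ((b2-d2)*(eta*K2*(b3-d3+m1)) - b2*d1*(-(b3-d3)))"
        unfolding G2_def rho0 pi0 DF0 using pos by (simp add: field_simps power2_eq_square)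
      moreover have "(b2-d2)*(eta*K2*(b3-d3+m1)) > - (b2 * d1 * (b3 - d3))"
      proof -
        have den: "eta*K2*(b3-d3+m1) > 0" using pos hb by simp
        have "- (b2 * d1 * (b3 - d3)) / (eta*K2*(b3-d3+m1)) < b2 - d2" using iii(3) by simp
        thus ?thesis by (simp only: pos_divide_less_eq[OF den])
      qed
      moreover have "b2*d1*(-(b3-d3)) = -(b2*d1*(b3-d3))" by (simp add: algebra_simps)
      moreover have "(-(b3-d3))*d1/K2 > 0" using iii pos by simp
      ultimately show ?thesis by (metis diff_gt_0_iff_gt mult_pos_pos)
    qed
    obtain x where x: "0 < x" "x < c1" "G2 b2 b3 d1 d2 d3 m1 m2 eta K1 K2 K3 x = 0"
      using ivt[OF G2_cont G0 G1 c1p] by blast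
    have "b3 * x / K3 > 0" using x(1) pos by simp
    hence "rhoF b3 d3 K3 x > 0" using iii(2) unfolding rhoF_def by simp
    then show ?thesis using x by (intro key[of x]) auto
  qed
qed

end
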